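(* Let $a,A$ be real with $a+3>0$ and $\frac{a+3}{2}=\frac{2}{A+3}$, and let $\xi,\eta,\mu$ be real. Then the general polynomial potentials $$U(r)=\xi r^{a+1}+\mu r^{2\left(\sqrt{\frac{a+3}{2}}-1\right)},\qquad V(\rho)=\eta\rho^{A+1}+\mu\left(\frac{A+3}{2}\right)^{2}\rho^{2\left(\sqrt{\frac{A+3}{2}}-1\right)}$$ are quantum Newtonianly dual, in the following sense: if $\mathcal{E}$ is real, $l,\ell$ are real with $l+\frac12=\frac{2}{A+3}(\ell+\frac12)$, $\xi=-\mathcal{E}\left(\frac{2}{A+3}\right)^2$, $E=-\eta\left(\frac{2}{A+3}\right)^2$, and $u\in C^2((0,\infty))$ solves $u''+\left[E-\frac{l(l+1)}{r^2}-U(r)\right]u=0$, then $v(\rho)=\rho^{-(A+1)/4}u\left(\rho^{(A+3)/2}\right)$ solves $v''+\left[\mathcal{E}-\frac{\ell(\ell+1)}{\rho^2}-V(\rho)\right]v=0$ on $(0,\infty)$. Moreover, $\xi r^{a+1}$ is the Newton dual of $\eta\rho^{A+1}$, and $\mu r^{2(\sqrt{(a+3)/2}-1)}$ is the Newton dual of $\mu\left(\frac{A+3}{2}\right)^2\rho^{2(\sqrt{(A+3)/2}-1)}$; i.e. with $b=2\sqrt{\frac{a+3}{2}}-3$ and $B=2\sqrt{\frac{A+3}{2}}-3$ one also has $\frac{b+3}{2}=\frac{2}{B+3}$.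
   Context: Three-dimensional radial equation (units $\hbar=2m=1$): $u''+\left[E-\frac{l(l+1)}{r^2}-W(r)\right]u=0$ for a central potential $W$. Two power potentials $\xi r^{\alpha+1}$ and $\eta\rho^{\beta+1}$ are Newtonianly dual when $\frac{\alpha+3}{2}=\frac{2}{\beta+3}$. *)

theory Defs
  imports Complex_Main
begin

text \<open>Power potentials xi r^(alpha+1) and eta rho^(beta+1) are Newtonianly dual
  when (alpha+3)/2 = 2/(beta+3).\<close>
definition newton_dual :: "real \<Rightarrow> real \<Rightarrow> bool" where
  "newton_dual \<alpha> \<beta> \<longleftrightarrow> (\<alpha> + 3) / 2 = 2 / (\<beta> + 3)"

definition solves_radial :: "(real \<Rightarrow> real) \<Rightarrow> real \<Rightarrow> real \<Rightarrow> (real \<Rightarrow> real) \<Rightarrow> bool" where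
  "solves_radial W E l u \<longleftrightarrow>
     (\<exists>u' u''. (\<forall>r>0. (u has_real_derivative u' r) (at r)
                      \<and> (u' has_real_derivative u'' r) (at r)
                      \<and> u'' r + (E - l * (l + 1) / r\<^sup>2 - W r) * u r = 0)
              \<and> continuous_on {0<..} u'')"

end

theory Submission imports Defs begin

lemma transform:
  fixes p k :: real and u u' u'' :: "real \<Rightarrow> real"
  assumes p: "p > 0" and k: "k = (1 - p)/2"
    and d: "\<forall>r>0. (u has_real_derivative u' r) (at r) \<and> (u' has_real_derivative u'' r) (at r)"
    and c: "continuous_on {0<..} u''"
  shows "\<forall>\<rho>>0. ((\<lambda>x. x powr k * u (x powr p)) has_real_derivative
              (k * \<rho> powr (k-1) * u (\<rho> powr p) + p * \<rho> powr (k+p-1) * u' (\<rho> powr p))) (at \<rho>)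
          \<and> ((\<lambda>x. k * x powr (k-1) * u (x powr p) + p * x powr (k+p-1) * u' (x powr p)) has_real_derivative
              (k*(k-1) * \<rho> powr (k-2) * u (\<rho> powr p) + p^2 * \<rho> powr (k+2*p-2) * u'' (\<rho> powr p))) (at \<rho>)"
    and "continuous_on {0<..} (\<lambda>\<rho>. k*(k-1) * \<rho> powr (k-2) * u (\<rho> powr p) + p^2 * \<rho> powr (k+2*p-2) * u'' (\<rho> powr p))"
proof -
  show "\<forall>\<rho>>0. ((\<lambda>x. x powr k * u (x powr p)) has_real_derivative
              (k * \<rho> powr (k-1) * u (\<rho> powr p) + p * \<rho> powr (k+p-1) * u' (\<rho> powr p))) (at \<rho>)
          \<and> ((\<lambda>x. k * x powr (k-1) * u (x powr p) + p * x powr (k+p-1) * u' (x powr p)) has_real_derivative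
              (k*(k-1) * \<rho> powr (k-2) * u (\<rho> powr p) + p^2 * \<rho> powr (k+2*p-2) * u'' (\<rho> powr p))) (at \<rho>)"
  proof (intro allI impI conjI)
    fix \<rho> :: real assume r: "\<rho> > 0"
    have R: "\<rho> powr p > 0" using r by simp
    have c1: "((\<lambda>x. u (x powr p)) has_real_derivative u' (\<rho> powr p) * (p * \<rho> powr (p-1))) (at \<rho>)"
      by (rule DERIV_chain2[OF _ has_real_derivative_powr[OF r]]) (use d R in blast)
    have c2: "((\<lambda>x. u' (x powr p)) has_real_derivative u'' (\<rho> powr p) * (p * \<rho> powr (p-1))) (at \<rho>)"
      by (rule DERIV_chain2[OF _ has_real_derivative_powr[OF r]]) (use d R in blast)
    show "((\<lambda>x. x powr k * u (x powr p)) has_real_derivative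
              (k * \<rho> powr (k-1) * u (\<rho> powr p) + p * \<rho> powr (k+p-1) * u' (\<rho> powr p))) (at \<rho>)"
    proof -
      have e1: "\<rho> powr k * \<rho> powr (p-1) = \<rho> powr (k+p-1)"
        using r by (simp add: powr_add[symmetric] algebra_simps)
      have eq: "k * \<rho> powr (k - 1) * u (\<rho> powr p) + u' (\<rho> powr p) * (p * \<rho> powr (p - 1)) * \<rho> powr k
          = k * \<rho> powr (k-1) * u (\<rho> powr p) + p * \<rho> powr (k+p-1) * u' (\<rho> powr p)"
        using e1 by (simp add: algebra_simps)
      show ?thesis using DERIV_mult[OF has_real_derivative_powr[OF r, of k] c1] unfolding eq .
    qed
    have e2: "\<rho> powr (k - 1) * \<rho> powr (p-1) = \<rho> powr (k+p-2)"
      "\<rho> powr (k + p - 1) * \<rho> powr (p-1) = \<rho> powr (k+2*p-2)"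
      "\<rho> powr (k + p - 1 - 1) = \<rho> powr (k+p-2)"
      "\<rho> powr (k - 1 - 1) = \<rho> powr (k-2)"
      using r by (simp_all add: powr_add[symmetric] algebra_simps)
    have z0: "2*k+p-1 = 0" using k by simp
    have "k * p + p * (k+p-1) = p*(2*k+p-1)" by (simp add: algebra_simps)
    then have z: "k * p + p * (k+p-1) = 0" using z0 by simp
    have d1: "((\<lambda>x. k * x powr (k-1)) has_real_derivative k * ((k-1) * \<rho> powr (k-1-1))) (at \<rho>)"
      by (intro DERIV_cmult has_real_derivative_powr r)
    have d2: "((\<lambda>x. p * x powr (k+p-1)) has_real_derivative p * ((k+p-1) * \<rho> powr (k+p-1-1))) (at \<rho>)"
      by (intro DERIV_cmult has_real_derivative_powr r)
    show "((\<lambda>x. k * x powr (k-1) * u (x powr p) + p * x powr (k+p-1) * u' (x powr p)) has_real_derivative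
              (k*(k-1) * \<rho> powr (k-2) * u (\<rho> powr p) + p^2 * \<rho> powr (k+2*p-2) * u'' (\<rho> powr p))) (at \<rho>)"
    proof (rule DERIV_cong[OF DERIV_add[OF DERIV_mult[OF d1 c1] DERIV_mult[OF d2 c2]]])
      have "k * ((k-1) * \<rho> powr (k-1-1)) * u (\<rho> powr p) + u' (\<rho> powr p) * (p * \<rho> powr (p-1)) * (k * \<rho> powr (k-1))
       + (p * ((k+p-1) * \<rho> powr (k+p-1-1)) * u' (\<rho> powr p) + u'' (\<rho> powr p) * (p * \<rho> powr (p-1)) * (p * \<rho> powr (k+p-1)))
       = k*(k-1) * \<rho> powr (k-2) * u (\<rho> powr p) + (k * p + p * (k+p-1)) * \<rho> powr (k+p-2) * u' (\<rho> powr p)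
         + p^2 * \<rho> powr (k+2*p-2) * u'' (\<rho> powr p)"
        using e2 by (simp add: algebra_simps power2_eq_square)
      then show "k * ((k-1) * \<rho> powr (k-1-1)) * u (\<rho> powr p) + u' (\<rho> powr p) * (p * \<rho> powr (p-1)) * (k * \<rho> powr (k-1))
       + (p * ((k+p-1) * \<rho> powr (k+p-1-1)) * u' (\<rho> powr p) + u'' (\<rho> powr p) * (p * \<rho> powr (p-1)) * (p * \<rho> powr (k+p-1)))
       = k*(k-1) * \<rho> powr (k-2) * u (\<rho> powr p) + p^2 * \<rho> powr (k+2*p-2) * u'' (\<rho> powr p)"
        using z by simp
    qed
  qed
  have cu: "continuous_on {0<..} u"
    using d by (meson DERIV_isCont continuous_at_imp_continuous_on greaterThan_iff)
  have cp: "continuous_on {0<..} (\<lambda>x::real. x powr p)"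
    by (intro continuous_intros) auto
  have im: "(\<lambda>x::real. x powr p) ` {0<..} \<subseteq> {0<..}" by auto
  have cu2: "continuous_on {0<..} (\<lambda>x. u (x powr p))"
    using continuous_on_compose2[OF cu cp im] .
  have cu3: "continuous_on {0<..} (\<lambda>x. u'' (x powr p))"
    using continuous_on_compose2[OF c cp im] .
  show "continuous_on {0<..} (\<lambda>\<rho>. k*(k-1) * \<rho> powr (k-2) * u (\<rho> powr p) + p^2 * \<rho> powr (k+2*p-2) * u'' (\<rho> powr p))"
    by (intro continuous_intros cu2 cu3) auto
qed


theorem mainTheorem6:
  fixes a A \<xi> \<eta> \<mu> EE E l ll :: real and u :: "real \<Rightarrow> real"
  assumes "a + 3 > 0"
    and "(a + 3) / 2 = 2 / (A + 3)"
    and "l + 1/2 = 2 / (A + 3) * (ll + 1/2)"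
    and "\<xi> = - EE * (2 / (A + 3))\<^sup>2"
    and "E = - \<eta> * (2 / (A + 3))\<^sup>2"
    and "solves_radial
           (\<lambda>r. \<xi> * r powr (a + 1) + \<mu> * r powr (2 * (sqrt ((a + 3) / 2) - 1))) E l u"
  shows "solves_radial
           (\<lambda>\<rho>. \<eta> * \<rho> powr (A + 1)
                 + \<mu> * ((A + 3) / 2)\<^sup>2 * \<rho> powr (2 * (sqrt ((A + 3) / 2) - 1)))
           EE ll (\<lambda>\<rho>. \<rho> powr (- (A + 1) / 4) * u (\<rho> powr ((A + 3) / 2)))
       \<and> newton_dual a A
       \<and> newton_dual (2 * sqrt ((a + 3) / 2) - 3) (2 * sqrt ((A + 3) / 2) - 3)"
proof -
  define p where "p = (A + 3) / 2"
  define k where "k = (1 - p) / 2"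
  have A3: "A + 3 \<noteq> 0" using assms(1,2) by auto
  have ap: "(a + 3) / 2 = 1 / p" using assms(2) A3 unfolding p_def by (simp add: field_simps)
  have p0: "p > 0" using ap assms(1) by (metis divide_pos_pos zero_less_divide_1_iff zero_less_numeral)
  have Ap: "A = 2*p - 3" unfolding p_def by (simp add: field_simps)
  have ap2: "a = 2/p - 3" using ap by (simp add: field_simps)
  have kA: "- (A + 1) / 4 = k" unfolding k_def Ap by (simp add: field_simps)
  have twoA: "2 / (A + 3) = 1 / p" unfolding p_def using A3 by simp
  define s where "s = sqrt p"
  have s0: "s > 0" using p0 s_def by simp
  have ss: "s * s = p" using p0 s_def by simp
  have sqa: "sqrt ((a + 3) / 2) = 1 / s" unfolding ap s_def by (simp add: real_sqrt_divide)
  have sqA: "sqrt ((A + 3) / 2) = s" unfolding s_def p_def ..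
  have dual1: "newton_dual a A" unfolding newton_dual_def using assms(2) .
  have dual2: "newton_dual (2 * sqrt ((a + 3) / 2) - 3) (2 * sqrt ((A + 3) / 2) - 3)"
    unfolding newton_dual_def sqa sqA using s0 by (simp add: field_simps)
  obtain u' u'' where uu: "\<forall>r>0. (u has_real_derivative u' r) (at r)
                      \<and> (u' has_real_derivative u'' r) (at r)
                      \<and> u'' r + (E - l * (l + 1) / r\<^sup>2 - (\<xi> * r powr (a + 1) + \<mu> * r powr (2 * (sqrt ((a + 3) / 2) - 1)))) * u r = 0"
    and cu: "continuous_on {0<..} u''"
    using assms(6) unfolding solves_radial_def by blast
  have k': "k = (1 - p)/2" by (simp add: k_def)
  note T = transform[OF p0 k', of u u' u'']
  have d: "\<forall>r>0. (u has_real_derivative u' r) (at r) \<and> (u' has_real_derivative u'' r) (at r)"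
    using uu by blast
  have sol: "solves_radial
           (\<lambda>\<rho>. \<eta> * \<rho> powr (A + 1)
                 + \<mu> * ((A + 3) / 2)\<^sup>2 * \<rho> powr (2 * (sqrt ((A + 3) / 2) - 1)))
           EE ll (\<lambda>\<rho>. \<rho> powr (- (A + 1) / 4) * u (\<rho> powr ((A + 3) / 2)))"
    unfolding solves_radial_def kA sqA p_def[symmetric] s_def[symmetric]
  proof (intro exI conjI allI impI)
    fix \<rho> :: real assume r: "\<rho> > 0"
    show "((\<lambda>x. x powr k * u (x powr p)) has_real_derivative
              (k * \<rho> powr (k-1) * u (\<rho> powr p) + p * \<rho> powr (k+p-1) * u' (\<rho> powr p))) (at \<rho>)"
      using T(1)[OF d cu] r by blast
    show "((\<lambda>x. k * x powr (k-1) * u (x powr p) + p * x powr (k+p-1) * u' (x powr p)) has_real_derivative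
              (k*(k-1) * \<rho> powr (k-2) * u (\<rho> powr p) + p^2 * \<rho> powr (k+2*p-2) * u'' (\<rho> powr p))) (at \<rho>)"
      using T(1)[OF d cu] r by blast
    define R where "R = \<rho> powr p"
    define X where "X = \<rho> powr (k-2)"
    define S where "S = \<rho> powr (2*s)"
    have R0: "R > 0" using r R_def by simp
    have X0: "X > 0" using r X_def by simp
    have RR: "R^2 = \<rho> powr (2*p)" unfolding R_def power2_eq_square using r
      by (simp add: powr_add[symmetric])
    have f1: "\<rho> powr k = X * \<rho>^2" unfolding X_def using r
      by (simp add: powr_add[symmetric] flip: powr_numeral)
    have f2: "\<rho> powr (k+2*p-2) = X * R^2" unfolding X_def RR using r
      by (simp add: powr_add[symmetric] algebra_simps)
    have f3: "R powr (a+1) * R^2 = \<rho>^2" unfolding R_def RR using r p0 ap2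
      by (simp add: powr_powr powr_add[symmetric] field_simps flip: powr_numeral)
    have ps: "p*2/s = s*2" using ss s0 by (simp add: field_simps flip: ss)
    have f4: "R powr (2 * (1/s - 1)) * R^2 = S" unfolding R_def RR S_def using r p0 ss s0
      by (simp add: ps powr_powr powr_add[symmetric] field_simps flip: powr_numeral)
    have f5: "\<rho> powr (A + 1) * \<rho>^2 = R^2" unfolding RR Ap using r
      by (simp add: powr_add[symmetric] flip: powr_numeral)
    have f6: "\<rho> powr (2 * (s - 1)) * \<rho>^2 = S" unfolding S_def using r
      by (simp add: powr_add[symmetric] algebra_simps flip: powr_numeral)
    have U: "u'' R = - (E - l * (l + 1) / R\<^sup>2 - (\<xi> * R powr (a + 1) + \<mu> * R powr (2 * (1/s - 1)))) * u R"
    proof -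
      have "u'' R + (E - l * (l + 1) / R\<^sup>2 - (\<xi> * R powr (a + 1) + \<mu> * R powr (2 * (1/s - 1)))) * u R = 0"
        using uu R0 unfolding sqa by blast
      then show ?thesis by linarith
    qed
    show "k*(k-1) * \<rho> powr (k-2) * u (\<rho> powr p) + p^2 * \<rho> powr (k+2*p-2) * u'' (\<rho> powr p) +
       (EE - ll * (ll + 1) / \<rho>\<^sup>2 - (\<eta> * \<rho> powr (A + 1) + \<mu> * p\<^sup>2 * \<rho> powr (2 * (s - 1)))) *
       (\<rho> powr k * u (\<rho> powr p)) = 0"
    proof -
      have g3: "R powr (a+1) = \<rho>^2 / R^2" using f3 R0 by (simp add: field_simps)
      have g4: "R powr (2 * (1/s - 1)) = S / R^2" using f4 R0 by (simp add: field_simps)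
      have g5: "\<rho> powr (A + 1) = R^2 / \<rho>^2" using f5 r by (simp add: field_simps)
      have g6: "\<rho> powr (2 * (s - 1)) = S / \<rho>^2" using f6 r by (simp add: field_simps)
      have lv: "l = (ll + 1/2) / p - 1/2" using assms(3) unfolding twoA by simp
      have xv: "\<xi> = - EE / p^2" using assms(4) unfolding twoA by (simp add: power_divide)
      have ev: "E = - \<eta> / p^2" using assms(5) unfolding twoA by (simp add: power_divide)
      show ?thesis
        unfolding R_def[symmetric] X_def[symmetric] f1 f2 U g3 g4 g5 g6 lv xv ev
        apply (unfold k_def)
        using r R0 p0 by (simp add: field_simps power2_eq_square) (simp add: algebra_simps)?
    qed
  qed (fact T(2)[OF d cu])
  show ?thesis using sol dual1 dual2 by blast
qed

end
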